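(* Let $G=\langle a_1,a_2,\dots,a_n\rangle$ be a finite semi-3-abelian 3-group with $|G/\Phi(G)|=3^{n}$. Then $\Omega_{1}(G)\le Z_{n+1}(G)$. Moreover, if $x=a_i^{m}\in\Omega_{1}(G)$ for some $1\le i\le n$ and some positive integer $m$, then $x\in Z_{n}(G)$.
   Context: A finite 3-group $G$ is semi-3-abelian if for all $a,b\in G$: $(ab)^{3}=1$ if and only if $a^{3}b^{3}=1$. $\Omega_{1}(G)=\langle g\in G : g^{3}=1\rangle$. $\Phi(G)$ is the Frattini subgroup and $Z_k(G)$ is the $k$-th term of the upper central series ($Z_0=1$, $Z_{k+1}/Z_k=Z(G/Z_k)$). *)

theory Defs
  imports "HOL-Algebra.Algebra"
begin

definition maximal_subgroup :: "('a, 'b) monoid_scheme \<Rightarrow> 'a set \<Rightarrow> bool" where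
  "maximal_subgroup G H \<longleftrightarrow> subgroup H G \<and> H \<noteq> carrier G \<and>
     (\<forall>K. subgroup K G \<and> H \<subseteq> K \<longrightarrow> K = H \<or> K = carrier G)"

text \<open>Frattini subgroup: intersection of all maximal subgroups (the whole group if there are none).\<close>
definition Frattini :: "('a, 'b) monoid_scheme \<Rightarrow> 'a set" where
  "Frattini G = carrier G \<inter> \<Inter>{H. maximal_subgroup G H}"

text \<open>Upper central series: Z_0 = 1, and x in Z_(k+1) iff xZ_k is central in G/Z_k,
  i.e. all commutators [x,y] lie in Z_k.\<close>
primrec upper_central :: "('a, 'b) monoid_scheme \<Rightarrow> nat \<Rightarrow> 'a set" where
  "upper_central G 0 = {\<one>\<^bsub>G\<^esub>}"
| "upper_central G (Suc k) = {x \<in> carrier G. \<forall>y \<in> carrier G.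
      x \<otimes>\<^bsub>G\<^esub> y \<otimes>\<^bsub>G\<^esub> inv\<^bsub>G\<^esub> x \<otimes>\<^bsub>G\<^esub> inv\<^bsub>G\<^esub> y \<in> upper_central G k}"

definition Omega1 :: "('a, 'b) monoid_scheme \<Rightarrow> 'a set" where
  "Omega1 G = generate G {g \<in> carrier G. g [^]\<^bsub>G\<^esub> (3::nat) = \<one>\<^bsub>G\<^esub>}"

definition semi_3_abelian :: "('a, 'b) monoid_scheme \<Rightarrow> bool" where
  "semi_3_abelian G \<longleftrightarrow> (\<forall>a \<in> carrier G. \<forall>b \<in> carrier G.
     (a \<otimes>\<^bsub>G\<^esub> b) [^]\<^bsub>G\<^esub> (3::nat) = \<one>\<^bsub>G\<^esub> \<longleftrightarrow>
     a [^]\<^bsub>G\<^esub> (3::nat) \<otimes>\<^bsub>G\<^esub> b [^]\<^bsub>G\<^esub> (3::nat) = \<one>\<^bsub>G\<^esub>)"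

end

theory Submission
  imports Defs
begin

context group begin

lemma cancel_l [simp]: "x \<in> carrier G \<Longrightarrow> y \<in> carrier G \<Longrightarrow> x \<otimes> (inv x \<otimes> y) = y"
  by (simp add: m_assoc[symmetric])
lemma cancel_l' [simp]: "x \<in> carrier G \<Longrightarrow> y \<in> carrier G \<Longrightarrow> inv x \<otimes> (x \<otimes> y) = y"
  by (simp add: m_assoc[symmetric])

definition com :: "'a \<Rightarrow> 'a \<Rightarrow> 'a" where "com x y = x \<otimes> y \<otimes> inv x \<otimes> inv y"
definition cj :: "'a \<Rightarrow> 'a \<Rightarrow> 'a" where "cj g z = g \<otimes> z \<otimes> inv g"

lemma cj_closed [simp]: "g \<in> carrier G \<Longrightarrow> z \<in> carrier G \<Longrightarrow> cj g z \<in> carrier G"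
  by (simp add: cj_def)
lemma com_closed [simp]: "g \<in> carrier G \<Longrightarrow> z \<in> carrier G \<Longrightarrow> com g z \<in> carrier G"
  by (simp add: com_def)

lemma uc_carrier: "upper_central G k \<subseteq> carrier G"
  by (cases k) auto

lemma uc_normal: "upper_central G k \<lhd> G"
proof (induction k)
  case 0
  then show ?case using one_is_normal by simp
next
  case (Suc k)
  interpret N: normal "upper_central G k" G by (rule Suc)
  have mem: "x \<in> upper_central G (Suc k) \<longleftrightarrow> x \<in> carrier G \<and> (\<forall>y\<in>carrier G. com x y \<in> upper_central G k)" for x
    by (simp add: com_def)
  have cjN: "g \<in> carrier G \<Longrightarrow> h \<in> upper_central G k \<Longrightarrow> cj g h \<in> upper_central G k" for g h
    unfolding cj_def by (rule N.inv_op_closed2) auto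
  have sub: "subgroup (upper_central G (Suc k)) G"
  proof (rule subgroupI)
    show "upper_central G (Suc k) \<subseteq> carrier G" by auto
    show "upper_central G (Suc k) \<noteq> {}"
    proof -
      have "\<one> \<in> upper_central G (Suc k)" unfolding mem by (simp add: com_def N.one_closed)
      then show ?thesis by blast
    qed
  next
    fix x assume x: "x \<in> upper_central G (Suc k)"
    show "inv x \<in> upper_central G (Suc k)" unfolding mem
    proof (intro conjI ballI)
      show "inv x \<in> carrier G" using x by auto
      fix y assume y: "y \<in> carrier G"
      have xc: "x \<in> carrier G" using x by auto
      have "com (inv x) y = cj (inv x) (inv (com x y))"
        using xc y by (simp add: com_def cj_def m_assoc inv_mult_group)
      moreover have "com x y \<in> upper_central G k" using x y mem by auto
      ultimately show "com (inv x) y \<in> upper_central G k"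
        using cjN xc by (simp add: N.m_inv_closed)
    qed
  next
    fix x x' assume x: "x \<in> upper_central G (Suc k)" and x': "x' \<in> upper_central G (Suc k)"
    show "x \<otimes> x' \<in> upper_central G (Suc k)" unfolding mem
    proof (intro conjI ballI)
      have xc: "x \<in> carrier G" and xc': "x' \<in> carrier G" using x x' by auto
      show "x \<otimes> x' \<in> carrier G" using xc xc' by simp
      fix y assume y: "y \<in> carrier G"
      have "com (x \<otimes> x') y = cj x (com x' y) \<otimes> com x y"
        using xc xc' y by (simp add: com_def cj_def m_assoc inv_mult_group)
      moreover have "com x y \<in> upper_central G k" "com x' y \<in> upper_central G k" using x x' y mem by auto
      ultimately show "com (x \<otimes> x') y \<in> upper_central G k"
        using cjN xc by (simp add: N.m_closed)
    qed
  qed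
  show ?case
  proof (rule normal_invI[OF sub])
    fix g h assume g: "g \<in> carrier G" and h: "h \<in> upper_central G (Suc k)"
    have hc: "h \<in> carrier G" using h by auto
    show "g \<otimes> h \<otimes> inv g \<in> upper_central G (Suc k)" unfolding mem
    proof (intro conjI ballI)
      show "g \<otimes> h \<otimes> inv g \<in> carrier G" using g hc by simp
      fix y assume y: "y \<in> carrier G"
      have "com (g \<otimes> h \<otimes> inv g) y = cj g (com h (inv g \<otimes> y \<otimes> g))"
        using g hc y by (simp add: com_def cj_def m_assoc inv_mult_group)
      moreover have "com h (inv g \<otimes> y \<otimes> g) \<in> upper_central G k" using h g y mem by auto
      ultimately show "com (g \<otimes> h \<otimes> inv g) y \<in> upper_central G k"
        using cjN g by simp
    qed
  qed
qed


lemma cj_one [simp]: "g \<in> carrier G \<Longrightarrow> cj g \<one> = \<one>" by (simp add: cj_def)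
lemma cj_by_one [simp]: "z \<in> carrier G \<Longrightarrow> cj \<one> z = z" by (simp add: cj_def)
lemma cj_mult: "g \<in> carrier G \<Longrightarrow> x \<in> carrier G \<Longrightarrow> y \<in> carrier G \<Longrightarrow> cj g (x \<otimes> y) = cj g x \<otimes> cj g y"
  by (simp add: cj_def m_assoc)
lemma cj_inv: "g \<in> carrier G \<Longrightarrow> x \<in> carrier G \<Longrightarrow> cj g (inv x) = inv (cj g x)"
  by (simp add: cj_def m_assoc inv_mult_group)
lemma cj_cj: "g \<in> carrier G \<Longrightarrow> h \<in> carrier G \<Longrightarrow> x \<in> carrier G \<Longrightarrow> cj g (cj h x) = cj (g \<otimes> h) x"
  by (simp add: cj_def m_assoc inv_mult_group)
lemma pow3: "x \<in> carrier G \<Longrightarrow> x [^] (3::nat) = x \<otimes> x \<otimes> x"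
  by (simp add: numeral_3_eq_3)
lemma cj_pow3: "g \<in> carrier G \<Longrightarrow> x \<in> carrier G \<Longrightarrow> cj g x [^] (3::nat) = cj g (x [^] (3::nat))"
  by (simp add: pow3 cj_mult)

lemma comm_inv: "a \<in> carrier G \<Longrightarrow> b \<in> carrier G \<Longrightarrow> a \<otimes> b = b \<otimes> a \<Longrightarrow> a \<otimes> inv b = inv b \<otimes> a"
proof -
  assume a: "a \<in> carrier G" and b: "b \<in> carrier G" and e: "a \<otimes> b = b \<otimes> a"
  have "inv b \<otimes> (a \<otimes> b) \<otimes> inv b = inv b \<otimes> (b \<otimes> a) \<otimes> inv b" using e by simp
  then show ?thesis using a b by (simp add: m_assoc)
qed

lemma generate_comm:
  assumes XX: "XX \<subseteq> carrier G" and c: "\<And>x y. x \<in> XX \<Longrightarrow> y \<in> XX \<Longrightarrow> x \<otimes> y = y \<otimes> x"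
  shows "a \<in> generate G XX \<Longrightarrow> b \<in> generate G XX \<Longrightarrow> a \<otimes> b = b \<otimes> a"
proof -
  have step: "a \<otimes> b = b \<otimes> a" if a: "a \<in> carrier G" and b: "b \<in> generate G XX"
     and ha: "\<And>x. x \<in> XX \<Longrightarrow> a \<otimes> x = x \<otimes> a" for a b
    using b
  proof (induction b rule: generate.induct)
    case one then show ?case using a by simp
  next
    case (incl h) then show ?case using ha by simp
  next
    case (inv h) then show ?case using ha a XX comm_inv by auto
  next
    case (eng h1 h2)
    have h1: "h1 \<in> carrier G" and h2: "h2 \<in> carrier G"
      using eng.hyps generate_in_carrier[OF XX] by auto
    have "a \<otimes> (h1 \<otimes> h2) = h1 \<otimes> a \<otimes> h2" using eng.IH(1) a h1 h2 by (simp add: m_assoc[symmetric])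
    also have "\<dots> = h1 \<otimes> h2 \<otimes> a" using eng.IH(2) a h1 h2 by (simp add: m_assoc)
    finally show ?case .
  qed
  assume a: "a \<in> generate G XX" and b: "b \<in> generate G XX"
  have "\<And>x. x \<in> XX \<Longrightarrow> x \<otimes> a = a \<otimes> x"
  proof -
    fix x assume x: "x \<in> XX"
    show "x \<otimes> a = a \<otimes> x" using step[of x a] x XX a c by auto
  qed
  then show ?thesis using step[of a b] a b generate_in_carrier[OF XX] by auto
qed

definition Om :: "'a set" where "Om = {g \<in> carrier G. g [^] (3::nat) = \<one>}"

lemma Om_inv: "x \<in> Om \<Longrightarrow> inv x \<in> Om"
  unfolding Om_def by (auto simp: pow3 inv_mult_group[symmetric] m_assoc)

lemma cj_Om: "g \<in> carrier G \<Longrightarrow> x \<in> Om \<Longrightarrow> cj g x \<in> Om"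
  unfolding Om_def by (auto simp: cj_pow3)

context
  assumes S3: "semi_3_abelian G"
begin

lemma Om_mult: "x \<in> Om \<Longrightarrow> y \<in> Om \<Longrightarrow> x \<otimes> y \<in> Om"
  using S3 unfolding Om_def semi_3_abelian_def by auto

lemma Om_subgroup: "subgroup Om G"
proof (rule subgroupI)
  show "Om \<subseteq> carrier G" unfolding Om_def by auto
  show "Om \<noteq> {}" unfolding Om_def by (auto intro!: exI[of _ \<one>])
qed (auto simp: Om_inv Om_mult)

lemma Omega1_eq: "Omega1 G = Om"
proof
  show "Omega1 G \<subseteq> Om" unfolding Omega1_def
    by (rule generate_subgroup_incl[OF _ Om_subgroup]) (auto simp: Om_def)
  show "Om \<subseteq> Omega1 G" unfolding Omega1_def Om_def by (auto intro: generate.incl)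
qed

lemma L2: assumes g: "g \<in> carrier G" and x: "x \<in> Om" shows "(g \<otimes> x) [^] (3::nat) = g [^] (3::nat)"
proof -
  have xc: "x \<in> carrier G" using x Om_def by auto
  have "(inv g \<otimes> (g \<otimes> x)) [^] (3::nat) = \<one>" using x g xc by (simp add: Om_def m_assoc[symmetric])
  moreover have "((inv g \<otimes> (g \<otimes> x)) [^] (3::nat) = \<one>) = (inv g [^] (3::nat) \<otimes> (g \<otimes> x) [^] (3::nat) = \<one>)"
    using S3 g xc unfolding semi_3_abelian_def by (meson inv_closed m_closed)
  ultimately have "inv g [^] (3::nat) \<otimes> (g \<otimes> x) [^] (3::nat) = \<one>" by simp
  then have "inv ((g \<otimes> x) [^] (3::nat)) = inv g [^] (3::nat)"
    using g xc by (intro inv_equality) auto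
  then have "inv (inv ((g \<otimes> x) [^] (3::nat))) = inv (inv g [^] (3::nat))" by simp
  then show ?thesis using g xc by (simp add: pow3 inv_mult_group m_assoc del: inv_inv)
qed

lemma E1: assumes g: "g \<in> carrier G" and x: "x \<in> Om" shows "x \<otimes> cj g x \<otimes> cj g (cj g x) = \<one>"
proof -
  have xc: "x \<in> carrier G" using x Om_def by auto
  have e: "g \<otimes> x \<otimes> (g \<otimes> x) \<otimes> (g \<otimes> x) = g \<otimes> g \<otimes> g" using L2[OF g x] g xc by (simp add: pow3)
  have "x \<otimes> cj g x \<otimes> cj g (cj g x) = inv g \<otimes> (g \<otimes> x \<otimes> (g \<otimes> x) \<otimes> (g \<otimes> x)) \<otimes> inv g \<otimes> inv g"
    using g xc by (simp add: cj_def m_assoc)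
  also have "\<dots> = \<one>" unfolding e using g by (simp add: m_assoc)
  finally show ?thesis .
qed

lemma comm1: assumes g: "g \<in> carrier G" and x: "x \<in> Om" shows "x \<otimes> cj g x = cj g x \<otimes> x"
proof -
  have xc: "x \<in> carrier G" using x Om_def by auto
  define u where "u = cj g x"
  define w where "w = cj g u"
  have uc: "u \<in> carrier G" and vc: "w \<in> carrier G" using g xc by (auto simp: u_def w_def)
  have e1: "x \<otimes> u \<otimes> w = \<one>" using E1[OF g x] by (simp add: u_def w_def)
  have e2: "inv x \<otimes> inv u \<otimes> inv w = \<one>" using E1[OF g Om_inv[OF x]] g xc
    by (simp add: u_def w_def cj_inv)
  have i1: "inv w = x \<otimes> u" using e1 uc vc xc by (intro inv_equality) (auto simp: m_assoc)
  have i2: "inv (inv w) = inv x \<otimes> inv u" using e2 uc vc xc by (intro inv_equality) (auto simp: m_assoc)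
  then have "inv w = u \<otimes> x" using uc vc xc by (simp add: inv_mult_group)
  with i1 show ?thesis by (simp add: u_def)
qed


definition NC :: "'a \<Rightarrow> 'a set" where "NC y = generate G {cj g y | g. g \<in> carrier G}"
definition D :: "'a \<Rightarrow> 'a \<Rightarrow> 'a" where "D g z = cj g z \<otimes> inv z"

context
  fixes y assumes yOm: "y \<in> Om"
begin

lemma yc: "y \<in> carrier G" using yOm Om_def by auto

lemma gens_sub: "{cj g y | g. g \<in> carrier G} \<subseteq> carrier G" using yc by auto

lemma NC_sub: "subgroup (NC y) G"
  unfolding NC_def by (rule generate_is_subgroup[OF gens_sub])

lemma NCc [simp]: "z \<in> NC y \<Longrightarrow> z \<in> carrier G"
  using subgroup.subset[OF NC_sub] by auto

lemma NC_Om: "z \<in> NC y \<Longrightarrow> z \<in> Om"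
  using generate_subgroup_incl[OF _ Om_subgroup, of "{cj g y | g. g \<in> carrier G}"] cj_Om[OF _ yOm]
  unfolding NC_def by blast

lemma y_NC: "y \<in> NC y"
  unfolding NC_def using yc by (intro generate.incl) (auto intro!: exI[of _ \<one>])

lemma NC_mult [simp]: "a \<in> NC y \<Longrightarrow> b \<in> NC y \<Longrightarrow> a \<otimes> b \<in> NC y"
  using subgroup.m_closed[OF NC_sub] by auto
lemma NC_inv [simp]: "a \<in> NC y \<Longrightarrow> inv a \<in> NC y"
  using subgroup.m_inv_closed[OF NC_sub] by auto
lemma NC_one [simp]: "\<one> \<in> NC y"
  using subgroup.one_closed[OF NC_sub] by auto

lemma NC_cj [simp]: assumes g: "g \<in> carrier G" shows "a \<in> NC y \<Longrightarrow> cj g a \<in> NC y"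
  unfolding NC_def
proof (induction a rule: generate.induct)
  case one then show ?case using g by (simp add: generate.one)
next
  case (incl h)
  then obtain k where k: "k \<in> carrier G" "h = cj k y" by auto
  then have "cj g h = cj (g \<otimes> k) y" using g yc by (simp add: cj_cj)
  then show ?case using g k by (auto intro!: generate.incl)
next
  case (inv h)
  then obtain k where k: "k \<in> carrier G" "h = cj k y" by auto
  then have "cj g (inv h) = inv (cj (g \<otimes> k) y)" using g yc by (simp add: cj_cj cj_inv)
  then show ?case using g k by (auto intro!: generate.inv)
next
  case (eng h1 h2)
  have "h1 \<in> carrier G" "h2 \<in> carrier G" using eng.hyps generate_in_carrier[OF gens_sub] by auto
  then have "cj g (h1 \<otimes> h2) = cj g h1 \<otimes> cj g h2" using g by (simp add: cj_mult)
  then show ?case using eng.IH by (simp add: generate.eng)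
qed

lemma NC_comm: "a \<in> NC y \<Longrightarrow> b \<in> NC y \<Longrightarrow> a \<otimes> b = b \<otimes> a"
  unfolding NC_def
proof (rule generate_comm[OF gens_sub])
  fix p q assume "p \<in> {cj g y | g. g \<in> carrier G}" "q \<in> {cj g y | g. g \<in> carrier G}"
  then obtain g h where g: "g \<in> carrier G" "p = cj g y" and h: "h \<in> carrier G" "q = cj h y" by auto
  define k where "k = inv h \<otimes> g"
  have kc: "k \<in> carrier G" using g h by (simp add: k_def)
  have pk: "p = cj h (cj k y)" using g h yc by (simp add: k_def cj_cj m_assoc[symmetric])
  have "cj h y \<otimes> cj h (cj k y) = cj h (y \<otimes> cj k y)" using h kc yc by (simp add: cj_mult)
  also have "\<dots> = cj h (cj k y \<otimes> y)" using comm1[OF kc yOm] by simp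
  also have "\<dots> = cj h (cj k y) \<otimes> cj h y" using h kc yc by (simp add: cj_mult)
  finally show "p \<otimes> q = q \<otimes> p" using pk h by simp
qed

lemma NC_lcomm: "a \<in> NC y \<Longrightarrow> b \<in> NC y \<Longrightarrow> c \<in> NC y \<Longrightarrow> a \<otimes> (b \<otimes> c) = b \<otimes> (a \<otimes> c)"
proof -
  assume a: "a \<in> NC y" and b: "b \<in> NC y" and c: "c \<in> NC y"
  have "a \<otimes> (b \<otimes> c) = (a \<otimes> b) \<otimes> c" using a b c by (simp add: m_assoc)
  also have "\<dots> = (b \<otimes> a) \<otimes> c" using NC_comm[OF a b] by simp
  finally show ?thesis using a b c by (simp add: m_assoc)
qed

lemma inv_sq: "z \<in> NC y \<Longrightarrow> inv z = z \<otimes> z"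
proof -
  assume z: "z \<in> NC y"
  then have "z \<otimes> z \<otimes> z = \<one>" using NC_Om[OF z] by (simp add: Om_def pow3)
  then show ?thesis using z by (intro inv_equality) (auto simp: m_assoc)
qed

lemma cube1: "z \<in> NC y \<Longrightarrow> z \<otimes> (z \<otimes> z) = \<one>"
  using NC_Om[of z] by (simp add: Om_def pow3 m_assoc)
lemma cube2: "z \<in> NC y \<Longrightarrow> w \<in> carrier G \<Longrightarrow> z \<otimes> (z \<otimes> (z \<otimes> w)) = w"
proof -
  assume z: "z \<in> NC y" and w: "w \<in> carrier G"
  have "z \<otimes> z \<otimes> z = \<one>" using cube1[OF z] z by (simp add: m_assoc)
  then show ?thesis using z w by (simp add: m_assoc[symmetric])
qed

lemma E1N: "z \<in> NC y \<Longrightarrow> g \<in> carrier G \<Longrightarrow> cj g (cj g z) = z \<otimes> (z \<otimes> (cj g z \<otimes> cj g z))"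
proof -
  assume z: "z \<in> NC y" and g: "g \<in> carrier G"
  have e: "z \<otimes> cj g z \<otimes> cj g (cj g z) = \<one>" using E1[OF g NC_Om[OF z]] .
  have e2: "cj g (cj g z) \<otimes> (z \<otimes> cj g z) = \<one>" using z g by (intro inv_comm[OF e]) auto
  have "inv (z \<otimes> cj g z) = cj g (cj g z)" using e2 z g by (intro inv_equality) (auto simp: m_assoc)
  moreover have "inv (z \<otimes> cj g z) = z \<otimes> (z \<otimes> (cj g z \<otimes> cj g z))"
    using z g by (simp add: inv_sq m_assoc NC_comm NC_lcomm)
  ultimately show ?thesis by simp
qed

lemmas ns = m_assoc NC_comm NC_lcomm inv_sq cube1 cube2


lemma D_NC [simp]: "g \<in> carrier G \<Longrightarrow> z \<in> NC y \<Longrightarrow> D g z \<in> NC y"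
  by (simp add: D_def)

lemma D_mult: "g \<in> carrier G \<Longrightarrow> z \<in> NC y \<Longrightarrow> w \<in> NC y \<Longrightarrow> D g (z \<otimes> w) = D g z \<otimes> D g w"
  by (simp add: D_def cj_mult ns)

lemma D_inv: "g \<in> carrier G \<Longrightarrow> z \<in> NC y \<Longrightarrow> D g (inv z) = inv (D g z)"
  by (simp add: D_def cj_inv cj_mult ns)

lemma D_one [simp]: "g \<in> carrier G \<Longrightarrow> D g \<one> = \<one>"
  by (simp add: D_def)

lemma D_by_one [simp]: "z \<in> NC y \<Longrightarrow> D \<one> z = \<one>"
  by (simp add: D_def)

lemma D_D: "g \<in> carrier G \<Longrightarrow> z \<in> NC y \<Longrightarrow> D g (D g z) = \<one>"
  by (simp add: D_def cj_mult cj_inv E1N ns)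

lemma D_comp: "g \<in> carrier G \<Longrightarrow> h \<in> carrier G \<Longrightarrow> z \<in> NC y \<Longrightarrow>
    D (g \<otimes> h) z = D g (D h z) \<otimes> D g z \<otimes> D h z"
  by (simp add: D_def cj_mult cj_inv cj_cj[symmetric] ns)

lemma D_inv_g: assumes g: "g \<in> carrier G" and z: "z \<in> NC y" shows "D (inv g) z = inv (D g z)"
proof -
  define w where "w = cj (inv g) z"
  have w: "w \<in> NC y" using g z by (simp add: w_def)
  have zw: "z = cj g w" using g z by (simp add: w_def cj_cj)
  have cw: "cj (inv g) (cj g w) = w" using g w by (simp add: cj_cj)
  show ?thesis unfolding zw D_def cw using g w
    by (simp add: cj_mult cj_inv E1N ns)
qed

lemmas ds = D_comp D_mult D_D D_inv_g ns

lemma D_anti: assumes a: "a \<in> carrier G" and b: "b \<in> carrier G" and z: "z \<in> NC y"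
  shows "D a (D b z) \<otimes> D b (D a z) = \<one>"
proof -
  have T: "D a (D b (D a x)) \<otimes> D a (D b x) \<otimes> D b (D a x) = \<one>" if x: "x \<in> NC y" for x
  proof -
    have "D a (D b (D a x)) \<otimes> D a (D b x) \<otimes> D b (D a x) =
      D (a \<otimes> b) (D (a \<otimes> b) x) \<otimes> D (a \<otimes> b) (D (a \<otimes> b) x) \<otimes> D (a \<otimes> inv b) (D (a \<otimes> inv b) x)"
      using a b x by (simp add: ds)
    also have "\<dots> = \<one>" using a b x by (simp add: D_D del: D_comp)
    finally show ?thesis .
  qed
  have ABA: "D a (D b (D a z)) = \<one>"
  proof -
    have "D a (D a (D b (D a z)) \<otimes> D a (D b z) \<otimes> D b (D a z)) = \<one>" using T[OF z] a by simp
    then show ?thesis using a b z by (simp add: ds)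
  qed
  show ?thesis using T[OF z] ABA a b z by (simp add: m_assoc)
qed


context
  fixes a :: "nat \<Rightarrow> 'a" and n :: nat
  assumes aC: "a ` {1..n} \<subseteq> carrier G"
begin

definition Fs :: "nat set \<Rightarrow> 'a set" where
  "Fs J = {z \<in> NC y. \<forall>l \<in> {1..n}. l \<notin> J \<longrightarrow> D (a l) z = \<one>}"
definition SS :: "nat set \<Rightarrow> 'a set" where
  "SS J = generate G (\<Union>j\<in>J. Fs (J - {j}))"

lemma Fs_NC: "Fs J \<subseteq> NC y" by (auto simp: Fs_def)

lemma Fs_mono: "J' \<subseteq> J \<Longrightarrow> Fs J' \<subseteq> Fs J" by (auto simp: Fs_def)

lemma SS_NC: "SS J \<subseteq> NC y"
  unfolding SS_def using Fs_NC by (intro generate_subgroup_incl[OF _ NC_sub]) auto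

lemma SS_sub: "subgroup (SS J) G"
  unfolding SS_def using Fs_NC NC_sub subgroup.subset by (intro generate_is_subgroup) blast

lemma SS_mono: "j \<in> J \<Longrightarrow> SS (J - {j}) \<subseteq> SS J"
  unfolding SS_def
proof (rule mono_generate)
  assume j: "j \<in> J"
  show "(\<Union>j'\<in>J - {j}. Fs (J - {j} - {j'})) \<subseteq> (\<Union>j\<in>J. Fs (J - {j}))"
  proof
    fix x assume "x \<in> (\<Union>j'\<in>J - {j}. Fs (J - {j} - {j'}))"
    then obtain j' where j': "j' \<in> J - {j}" "x \<in> Fs (J - {j} - {j'})" by auto
    then have "x \<in> Fs (J - {j'})" using Fs_mono[of "J - {j} - {j'}" "J - {j'}"] by auto
    then show "x \<in> (\<Union>j\<in>J. Fs (J - {j}))" using j' by auto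
  qed
qed

lemma Fs_SS: "j \<in> J \<Longrightarrow> x \<in> Fs (J - {j}) \<Longrightarrow> x \<in> SS J"
  unfolding SS_def by (rule generate.incl) auto

lemma Dmap:
  assumes g: "g \<in> carrier G" and P: "\<And>J z. z \<in> Fs J \<Longrightarrow> D g z \<in> SS J"
  shows "w \<in> SS J \<Longrightarrow> D g w \<in> SS J"
proof -
  assume w: "w \<in> SS J"
  have gen_sub: "(\<Union>j\<in>J. Fs (J - {j})) \<subseteq> NC y" using Fs_NC by auto
  from w show ?thesis unfolding SS_def
  proof (induction w rule: generate.induct)
    case one then show ?case using g by (simp add: generate.one)
  next
    case (incl h)
    then obtain j where j: "j \<in> J" "h \<in> Fs (J - {j})" by auto
    have "D g h \<in> SS (J - {j})" using P[OF j(2)] .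
    then show ?case using SS_mono[OF j(1)] unfolding SS_def by auto
  next
    case (inv h)
    then obtain j where j: "j \<in> J" "h \<in> Fs (J - {j})" by auto
    have hN: "h \<in> NC y" using j Fs_NC by auto
    have "D g h \<in> SS J" using P[OF j(2)] SS_mono[OF j(1)] by auto
    then have "inv (D g h) \<in> SS J" using subgroup.m_inv_closed[OF SS_sub] by auto
    then show ?case using D_inv[OF g hN] unfolding SS_def by simp
  next
    case (eng h1 h2)
    have "h1 \<in> NC y" "h2 \<in> NC y" using eng.hyps generate_subgroup_incl[OF gen_sub NC_sub] by auto
    then have "D g (h1 \<otimes> h2) = D g h1 \<otimes> D g h2" using g by (simp add: D_mult)
    then show ?case using eng.IH by (simp add: generate.eng)
  qed
qed


lemma gen_case: assumes i: "i \<in> {1..n}" and z: "z \<in> Fs J" shows "D (a i) z \<in> SS J"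
proof -
  have ai: "a i \<in> carrier G" using i aC by auto
  have zN: "z \<in> NC y" using z Fs_NC by auto
  show ?thesis
  proof (cases "i \<in> J")
    case False
    then have "D (a i) z = \<one>" using z i by (auto simp: Fs_def)
    then show ?thesis unfolding SS_def by (simp add: generate.one)
  next
    case True
    have "D (a i) z \<in> Fs (J - {i})" unfolding Fs_def
    proof (intro CollectI conjI ballI impI)
      show "D (a i) z \<in> NC y" using ai zN by simp
      fix l assume l: "l \<in> {1..n}" "l \<notin> J - {i}"
      have al: "a l \<in> carrier G" using l aC by auto
      show "D (a l) (D (a i) z) = \<one>"
      proof (cases "l = i")
        case True then show ?thesis using D_D[OF ai zN] by simp
      next
        case False
        then have "D (a l) z = \<one>" using l z by (auto simp: Fs_def)
        then show ?thesis using D_anti[OF al ai zN] al ai zN by simp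
      qed
    qed
    then show ?thesis using Fs_SS[OF True] by simp
  qed
qed

lemma K: "g \<in> generate G (a ` {1..n}) \<Longrightarrow> z \<in> Fs J \<Longrightarrow> D g z \<in> SS J"
proof (induction g arbitrary: J z rule: generate.induct)
  case one
  then have "z \<in> NC y" using Fs_NC by auto
  then show ?case unfolding SS_def by (simp add: generate.one)
next
  case (incl h)
  then show ?case using gen_case by auto
next
  case (inv h)
  then obtain i where i: "i \<in> {1..n}" "h = a i" by auto
  have zN: "z \<in> NC y" using inv Fs_NC by auto
  have "D h z \<in> SS J" using gen_case[OF i(1) inv(2)] i by simp
  then have "inv (D h z) \<in> SS J" using subgroup.m_inv_closed[OF SS_sub] by auto
  moreover have "h \<in> carrier G" using i aC by auto
  ultimately show ?case using D_inv_g[OF _ zN, of h] by simp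
next
  case (eng h1 h2)
  have h1: "h1 \<in> carrier G" and h2: "h2 \<in> carrier G"
    using eng.hyps generate_in_carrier[OF aC] by auto
  have zN: "z \<in> NC y" using eng.prems Fs_NC by blast
  have d2: "D h2 z \<in> SS J" using eng by auto
  have d1: "D h1 z \<in> SS J" using eng by auto
  have d12: "D h1 (D h2 z) \<in> SS J" using Dmap[OF h1 eng.IH(1) d2] by auto
  have "D (h1 \<otimes> h2) z = D h1 (D h2 z) \<otimes> D h1 z \<otimes> D h2 z" using D_comp[OF h1 h2 zN] .
  then show ?case using d1 d2 d12 subgroup.m_closed[OF SS_sub] by simp
qed

lemma Zmain:
  assumes gen: "generate G (a ` {1..n}) = carrier G"
  shows "finite J \<Longrightarrow> card J = k \<Longrightarrow> Fs J \<subseteq> upper_central G (Suc k)"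
proof (induction k arbitrary: J)
  case 0
  then have J: "J = {}" by auto
  show ?case
  proof
    fix z assume z: "z \<in> Fs J"
    have zN: "z \<in> NC y" using z Fs_NC by auto
    have "z \<otimes> g \<otimes> inv z \<otimes> inv g \<in> upper_central G 0" if g: "g \<in> carrier G" for g
    proof -
      have "D g z \<in> SS J" using K[OF _ z] g gen by auto
      then have "D g z \<in> generate G {}" using J by (simp add: SS_def)
      then have "D g z = \<one>" by (simp add: generate_empty)
      moreover have "z \<otimes> g \<otimes> inv z \<otimes> inv g = inv (D g z)" using g zN
        by (simp add: D_def cj_def inv_mult_group m_assoc)
      ultimately show ?thesis by simp
    qed
    then show "z \<in> upper_central G (Suc 0)" using zN by auto
  qed
next
  case (Suc k)
  show ?case
  proof
    fix z assume z: "z \<in> Fs J"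
    have zN: "z \<in> NC y" using z Fs_NC by auto
    have sub: "(\<Union>j\<in>J. Fs (J - {j})) \<subseteq> upper_central G (Suc k)"
    proof
      fix x assume "x \<in> (\<Union>j\<in>J. Fs (J - {j}))"
      then obtain j where j: "j \<in> J" "x \<in> Fs (J - {j})" by auto
      have "card (J - {j}) = k" using Suc.prems j by simp
      then show "x \<in> upper_central G (Suc k)" using Suc.IH[of "J - {j}"] Suc.prems j by auto
    qed
    have SZ: "SS J \<subseteq> upper_central G (Suc k)"
      unfolding SS_def by (rule generate_subgroup_incl[OF sub normal_imp_subgroup[OF uc_normal]])
    have "z \<otimes> g \<otimes> inv z \<otimes> inv g \<in> upper_central G (Suc k)" if g: "g \<in> carrier G" for g
    proof -
      have "D g z \<in> SS J" using K[OF _ z] g gen by auto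
      then have "inv (D g z) \<in> upper_central G (Suc k)" using SZ
        subgroup.m_inv_closed[OF normal_imp_subgroup[OF uc_normal]] by blast
      moreover have "z \<otimes> g \<otimes> inv z \<otimes> inv g = inv (D g z)" using g zN
        by (simp add: D_def cj_def inv_mult_group m_assoc)
      ultimately show ?thesis by simp
    qed
    then show "z \<in> upper_central G (Suc (Suc k))" using zN by auto
  qed
qed

end
end
end
end

theorem lemma3p3:
  fixes G (structure) and a :: "nat \<Rightarrow> 'a" and n :: nat
  assumes "group G"
    and "finite (carrier G)"
    and "\<exists>k::nat. order G = 3 ^ k"
    and "semi_3_abelian G"
    and "a ` {1..n} \<subseteq> carrier G"
    and "generate G (a ` {1..n}) = carrier G"
    and "order (G Mod (Frattini G)) = 3 ^ n"
  shows "Omega1 G \<subseteq> upper_central G (n + 1)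
    \<and> (\<forall>i m. 1 \<le> i \<and> i \<le> n \<and> 0 < m \<and> a i [^] (m::nat) \<in> Omega1 G
          \<longrightarrow> a i [^] m \<in> upper_central G n)"
proof -
  interpret group G by (rule assms(1))
  note S3 = assms(4) and aC = assms(5) and gen = assms(6)
  have P1: "Omega1 G \<subseteq> upper_central G (n + 1)"
  proof
    fix x assume "x \<in> Omega1 G"
    then have x: "x \<in> Om" using Omega1_eq[OF S3] by simp
    have "x \<in> Fs x a n {1..n}" using y_NC[OF S3 x] by (auto simp: Fs_def[OF S3 x aC])
    then show "x \<in> upper_central G (n + 1)"
      using Zmain[OF S3 x aC gen, of "{1..n}" n] by auto
  qed
  have P2: "a i [^] m \<in> upper_central G n"
    if i: "1 \<le> i" "i \<le> n" and m: "a i [^] (m::nat) \<in> Omega1 G" for i m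
  proof -
    define y where "y = a i [^] m"
    have yO: "y \<in> Om" using m Omega1_eq[OF S3] by (simp add: y_def)
    have ai: "a i \<in> carrier G" using i aC by auto
    have Dy: "D (a i) y = \<one>"
    proof -
      have "a i \<otimes> y = y \<otimes> a i" unfolding y_def using ai
        by (metis nat_pow_Suc nat_pow_Suc2)
      then have "a i \<otimes> y \<otimes> inv (a i) = y \<otimes> a i \<otimes> inv (a i)" by simp
      also have "\<dots> = y" using ai by (simp add: y_def m_assoc)
      finally have "a i \<otimes> y \<otimes> inv (a i) = y" .
      then show ?thesis using ai by (simp add: D_def[OF S3] cj_def y_def)
    qed
    have "y \<in> Fs y a n ({1..n} - {i})" using y_NC[OF S3 yO] Dy by (auto simp: Fs_def[OF S3 yO aC])
    moreover have "card ({1..n} - {i}) = n - 1" using i by simp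
    ultimately have "y \<in> upper_central G (Suc (n - 1))"
      using Zmain[OF S3 yO aC gen, of "{1..n} - {i}" "n - 1"] by auto
    moreover have "Suc (n - 1) = n" using i by simp
    ultimately show ?thesis by (simp add: y_def)
  qed
  show ?thesis using P1 P2 by blast
qed

end
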